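(* Let $b>3$ and let $f:B(b)\to\mathbb{C}$ be a conformal embedding (injective holomorphic map) with $f(0)=0$ and $f(z+1)=f(z)+1$ for all $z\in B(b)$. Then for all $z=x+iy\in B(b-3)$, $$|f(z)-z|\le C_2\,\frac{e^{2\pi|y|}+(b+1)^2}{e^{2\pi b}},$$ where $C_1=\sqrt{8/\pi}$ and $C_2=8\pi e^{5\pi}(C_1+1)$.
   Context: $B(b)=\{z\in\mathbb{C}:|\operatorname{Im}z|<b\}$. *)

theory Defs
  imports "HOL-Complex_Analysis.Complex_Analysis"
begin

definition strip :: "real \<Rightarrow> complex set" where
  "strip b = {z. \<bar>Im z\<bar> < b}"

end

theory Submission
  imports Defs
begin

lemma open_strip: "open (strip b)"
  unfolding strip_def by (intro open_Collect_less continuous_intros)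

lemma strip_Im: "z \<in> strip b \<longleftrightarrow> \<bar>Im z\<bar> < b"
  by (simp add: strip_def)

lemma deriv_periodic:
  assumes hol: "f holomorphic_on strip b"
    and per: "\<And>z. z \<in> strip b \<Longrightarrow> f (z + 1) = f z + 1"
    and w: "w \<in> strip b"
  shows "deriv f (w + 1) = deriv f w"
proof -
  have ev: "eventually (\<lambda>x. f (x + 1) = f x + 1) (nhds w)"
    using eventually_nhds_in_open[OF open_strip w] per by (auto elim: eventually_mono)
  have w1: "w + 1 \<in> strip b" using w by (simp add: strip_Im)
  have d1: "(f has_field_derivative deriv f (w+1)) (at (w+1))"
    using holomorphic_derivI[OF hol open_strip w1] .
  have "((\<lambda>x. f (x + 1)) has_field_derivative deriv f (w+1)) (at w)"
  proof -
    have "((\<lambda>x. x + 1) has_field_derivative 1) (at w)" by (auto intro!: derivative_eq_intros)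
    thus ?thesis using DERIV_chain2[of f "deriv f (w+1)" "\<lambda>x. x + 1" w 1 UNIV] d1 by simp
  qed
  hence "deriv (\<lambda>x. f (x + 1)) w = deriv f (w+1)" by (rule DERIV_imp_deriv)
  moreover have "deriv (\<lambda>x. f (x + 1)) w = deriv (\<lambda>x. f x + 1) w"
    by (rule deriv_cong_ev[OF ev refl])
  moreover have "((\<lambda>x. f x + 1) has_field_derivative deriv f w) (at w)"
    using holomorphic_derivI[OF hol open_strip w] by (auto intro!: derivative_eq_intros)
  hence "deriv (\<lambda>x. f x + 1) w = deriv f w" by (rule DERIV_imp_deriv)
  ultimately show ?thesis by simp
qed

lemma deriv_bound:
  assumes hol: "f holomorphic_on strip b" and inj: "inj_on f (strip b)"
    and per: "\<And>z. z \<in> strip b \<Longrightarrow> f (z + 1) = f z + 1"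
    and w: "\<bar>Im w\<bar> \<le> b - 1/2"
  shows "cmod (deriv f w) \<le> 12"
proof (rule ccontr)
  assume nt: "\<not> ?thesis"
  define r' where "r' = 1/2 * cmod (deriv f w) / 12"
  have r': "r' > 1/2" using nt by (simp add: r'_def)
  have ballsub: "ball w (1/2) \<subseteq> strip b"
  proof
    fix u assume "u \<in> ball w (1/2)"
    hence "cmod (u - w) < 1/2" by (simp add: dist_norm norm_minus_commute)
    moreover have "\<bar>Im (u - w)\<bar> \<le> cmod (u - w)" by (rule abs_Im_le_cmod)
    ultimately show "u \<in> strip b" using w by (simp add: strip_Im)
  qed
  obtain c where c: "ball c r' \<subseteq> f ` ball w (1/2)"
    using Bloch[OF holomorphic_on_subset[OF hol ballsub], of r'] by (auto simp: r'_def)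
  have "c + 1/2 \<in> ball c r'" "c - 1/2 \<in> ball c r'" using r' by (auto simp: dist_norm)
  hence i1: "c + 1/2 \<in> f ` ball w (1/2)" and i2: "c - 1/2 \<in> f ` ball w (1/2)" using c by auto
  obtain w1 where w1: "w1 \<in> ball w (1/2)" "f w1 = c + 1/2" using i1 by (auto elim!: imageE)
  obtain w2 where w2: "w2 \<in> ball w (1/2)" "f w2 = c - 1/2" using i2 by (auto elim!: imageE)
  have w1s: "w1 \<in> strip b" and w2s: "w2 \<in> strip b" using w1 w2 ballsub by auto
  have w21: "w2 + 1 \<in> strip b" using w2s by (simp add: strip_Im)
  have "f (w2 + 1) = f w1" using per[OF w2s] w1 w2 by simp
  hence "w2 + 1 = w1" using inj_onD[OF inj _ w21 w1s] by simp
  moreover have "cmod (w1 - w) < 1/2" "cmod (w2 - w) < 1/2"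
    using w1 w2 by (auto simp: dist_norm norm_minus_commute)
  ultimately have "cmod ((w1 - w) - (w2 - w)) < 1"
    using norm_triangle_ineq4[of "w1 - w" "w2 - w"] by linarith
  moreover have "(w1 - w) - (w2 - w) = 1" using \<open>w2 + 1 = w1\<close> by (simp add: algebra_simps)
  ultimately show False by simp
qed


lemma kernel_limit:
  fixes z :: complex
  shows "((\<lambda>w. (w - z) * (2*pi*\<i> / (1 - exp (2*pi*\<i>*(z - w))))) \<longlongrightarrow> 1) (at z)"
proof -
  define h where "h w = 1 - exp (2*pi*\<i>*(z - w))" for w
  have hd: "(h has_field_derivative 2*pi*\<i>) (at z)"
    unfolding h_def by (auto intro!: derivative_eq_intros)
  have hz: "h z = 0" by (simp add: h_def)
  have lim: "((\<lambda>w. (h w - h z) / (w - z)) \<longlongrightarrow> 2*pi*\<i>) (at z)"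
    using hd by (simp add: has_field_derivative_iff)
  hence lim2: "((\<lambda>w. (2*pi*\<i>) / ((h w - h z) / (w - z))) \<longlongrightarrow> (2*pi*\<i>) / (2*pi*\<i>)) (at z)"
    by (intro tendsto_divide tendsto_const) auto
  have ev: "eventually (\<lambda>w. (2*pi*\<i>) / ((h w - h z) / (w - z)) = (w - z) * (2*pi*\<i> / (1 - exp (2*pi*\<i>*(z - w))))) (at z)"
    unfolding eventually_at_filter by (auto simp: hz h_def field_simps)
  show ?thesis using Lim_transform_eventually[OF lim2 ev] by simp
qed

lemma exp_factor_ne1:
  fixes z w :: complex
  assumes "\<bar>Re w - Re z\<bar> < 1" "w \<noteq> z"
  shows "1 - exp (2*pi*\<i>*(z - w)) \<noteq> 0"
proof
  assume "1 - exp (2*pi*\<i>*(z - w)) = 0"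
  hence "exp (2*pi*\<i>*(z - w)) = 1" by simp
  then obtain n :: int where h1: "Re (2*pi*\<i>*(z - w)) = 0" and h2: "Im (2*pi*\<i>*(z - w)) = of_int (2*n) * pi"
    by (auto simp: exp_eq_1)
  have "Im z = Im w" using h1 by simp
  moreover have "Re z - Re w = of_int n"
  proof -
    have "(2*pi)*(Re z - Re w) = (2*pi) * of_int n" using h2 by (simp add: algebra_simps)
    thus ?thesis using pi_gt_zero by (metis mult_cancel_left pi_neq_zero mult_eq_0_iff zero_neq_numeral)
  qed
  moreover have "n = 0" using assms(1) \<open>Re z - Re w = of_int n\<close> by linarith
  ultimately show False using assms(2) by (simp add: complex_eq_iff)
qed

lemma K_bottom:
  fixes z w :: complex and B :: real
  assumes "Im w = - B" "\<bar>Im z\<bar> < B"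
  shows "cmod (2*pi*\<i> / (1 - exp (2*pi*\<i>*(z - w))) - 2*pi*\<i>)
          \<le> 2*pi * (exp (-2*pi*(Im z + B)) / (1 - exp (-2*pi*(Im z + B))))"
proof -
  define e where "e = exp (2*pi*\<i>*(z - w))"
  define \<epsilon> where "\<epsilon> = exp (-2*pi*(Im z + B))"
  have ce: "cmod e = \<epsilon>" unfolding e_def \<epsilon>_def norm_exp_eq_Re using assms(1) by (simp add: algebra_simps)
  have "-2*pi*(Im z + B) < 0" using assms pi_gt_zero by (simp add: mult_pos_pos)
  hence eps1: "\<epsilon> < 1" "0 < \<epsilon>" unfolding \<epsilon>_def by auto
  have d: "1 - \<epsilon> \<le> cmod (1 - e)" using norm_triangle_ineq2[of 1 e] ce by simp
  hence ne: "1 - e \<noteq> 0" using eps1 by auto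
  have "2*pi*\<i> / (1 - e) - 2*pi*\<i> = 2*pi*\<i> * e / (1 - e)" using ne by (simp add: field_simps)
  hence "cmod (2*pi*\<i> / (1 - e) - 2*pi*\<i>) = 2*pi*\<epsilon> / cmod (1 - e)"
    by (simp add: norm_divide norm_mult ce)
  also have "\<dots> \<le> 2*pi*\<epsilon> / (1 - \<epsilon>)"
    by (rule frac_le) (use eps1 d in auto)
  finally show ?thesis unfolding e_def \<epsilon>_def by simp
qed

lemma K_top:
  fixes z w :: complex and B :: real
  assumes "Im w = B" "\<bar>Im z\<bar> < B"
  shows "cmod (2*pi*\<i> / (1 - exp (2*pi*\<i>*(z - w))))
          \<le> 2*pi * (1 / (exp (2*pi*(B - Im z)) - 1))"
proof -
  define e where "e = exp (2*pi*\<i>*(z - w))"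
  define E where "E = exp (2*pi*(B - Im z))"
  have ce: "cmod e = E" unfolding e_def E_def norm_exp_eq_Re using assms(1) by (simp add: algebra_simps)
  have "0 < 2*pi*(B - Im z)" using assms pi_gt_zero by (simp add: mult_pos_pos)
  hence E1: "1 < E" unfolding E_def by auto
  have d: "E - 1 \<le> cmod (1 - e)" using norm_triangle_ineq2[of e 1] ce by (simp add: norm_minus_commute)
  have "cmod (2*pi*\<i> / (1 - e)) = 2*pi / cmod (1 - e)"
    by (simp add: norm_divide norm_mult)
  also have "\<dots> \<le> 2*pi / (E - 1)"
    by (rule frac_le) (use E1 d in auto)
  finally show ?thesis unfolding e_def E_def by simp
qed


lemma core:
  fixes f :: "complex \<Rightarrow> complex" and b B M :: real and z :: complex
  assumes hol: "f holomorphic_on strip b"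
    and per: "\<And>w. w \<in> strip b \<Longrightarrow> f (w + 1) = f w + 1"
    and B: "0 < B" "B < b"
    and Mb: "\<And>w. \<bar>Im w\<bar> \<le> B \<Longrightarrow> cmod (deriv f w - 1) \<le> M"
    and z: "\<bar>Im z\<bar> < B"
  shows "cmod (deriv f z - 1) \<le> M * (exp (-2*pi*(Im z + B)) / (1 - exp (-2*pi*(Im z + B)))
           + 1 / (exp (2*pi*(B - Im z)) - 1))"
proof -
  define G where "G w = deriv f w - 1" for w
  define K where "K w = 2*pi*\<i> / (1 - exp (2*pi*\<i>*(z - w)))" for w
  define \<psi> where "\<psi> w = (if w = z then 1 else (w - z) * K w)" for w
  define x0 where "x0 = Re z"
  define B' where "B' = (B + b)/2"
  define S where "S = box (Complex (x0 - 3/5) (-B')) (Complex (x0 + 3/5) B')"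
  define a1 where "a1 = Complex (x0 - 1/2) (-B)"
  define a2 where "a2 = Complex (x0 + 1/2) (-B)"
  define a3 where "a3 = Complex (x0 + 1/2) B"
  define a4 where "a4 = Complex (x0 - 1/2) B"
  have M0: "0 \<le> M" using Mb[of 0] B by (smt (verit) norm_ge_zero abs_zero zero_complex.sel(2))
  have S_iff: "w \<in> S \<longleftrightarrow> \<bar>Re w - x0\<bar> < 3/5 \<and> \<bar>Im w\<bar> < B'" for w
    unfolding S_def in_box_complex_iff by (simp only: complex.sel greaterThanLessThan_iff abs_less_iff) arith
  have Ssub: "S \<subseteq> strip b" using B by (auto simp: S_iff strip_Im B'_def)
  have openS: "open S" "convex S" by (simp_all add: S_def open_box convex_box)
  have holG: "G holomorphic_on strip b"
    unfolding G_def by (rule holomorphic_on_diff[OF holomorphic_deriv[OF hol open_strip] holomorphic_on_const])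
  have Gper: "G (w + 1) = G w" if "w \<in> strip b" for w
    unfolding G_def using deriv_periodic[OF hol per that] by simp
  have Kper: "K (w + 1) = K w" for w
  proof -
    have "2*pi*\<i>*(z - (w+1)) = 2*pi*\<i>*(z-w) - 2*pi*\<i>" by (simp add: algebra_simps)
    hence "exp (2*pi*\<i>*(z - (w+1))) = exp (2*pi*\<i>*(z-w))" by (simp add: exp_diff)
    thus ?thesis by (simp add: K_def)
  qed
  have den: "1 - exp (2*pi*\<i>*(z - w)) \<noteq> 0" if "w \<in> S" "w \<noteq> z" for w
    using exp_factor_ne1[of w z] that by (auto simp: S_iff x0_def)
  have holK: "K holomorphic_on (S - {z})"
    unfolding K_def using den by (intro holomorphic_intros) auto
  have hol\<psi>0: "\<psi> holomorphic_on (S - {z})"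
  proof (rule holomorphic_transform[of "\<lambda>w. (w - z) * K w"])
    show "(\<lambda>w. (w - z) * K w) holomorphic_on S - {z}" using holK by (intro holomorphic_intros)
  qed (auto simp: \<psi>_def)
  have lim\<psi>: "(\<psi> \<longlongrightarrow> \<psi> z) (at z within S)"
  proof -
    have "((\<lambda>w. (w - z) * K w) \<longlongrightarrow> 1) (at z)"
      using kernel_limit[of z] by (simp add: K_def)
    hence "(\<psi> \<longlongrightarrow> 1) (at z)"
      by (rule Lim_transform_eventually) (auto simp: eventually_at_filter \<psi>_def)
    thus ?thesis by (auto simp: \<psi>_def intro: tendsto_within_subset)
  qed
  have hol\<psi>: "\<psi> holomorphic_on S"
    by (rule no_isolated_singularity'[of "{z}"]) (use lim\<psi> hol\<psi>0 openS in auto)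
  have hol\<phi>: "(\<lambda>w. G w * \<psi> w) holomorphic_on S"
    using holomorphic_on_subset[OF holG Ssub] hol\<psi> by (intro holomorphic_intros)
  have zS: "z \<in> S" using z B by (auto simp: S_iff x0_def B'_def)
  have zbox: "z \<in> box a1 a3" using z by (auto simp: in_box_complex_iff a1_def a3_def x0_def)
  have pim: "path_image (rectpath a1 a3) =
           {w. Re w \<in> {x0 - 1/2, x0 + 1/2} \<and> Im w \<in> {-B..B}} \<union>
           {w. Im w \<in> {-B, B} \<and> Re w \<in> {x0 - 1/2..x0 + 1/2}}"
    using B by (subst path_image_rectpath) (auto simp: a1_def a3_def)
  have pimS: "path_image (rectpath a1 a3) \<subseteq> S - {z}"
    using B z unfolding pim by (auto simp: S_iff B'_def x0_def abs_less_iff abs_if)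
  have cauchy: "((\<lambda>w. G w * \<psi> w / (w - z)) has_contour_integral
                  (2*pi*\<i> * winding_number (rectpath a1 a3) z * (G z * \<psi> z))) (rectpath a1 a3)"
    by (rule Cauchy_integral_formula_convex_simple[OF openS(2) hol\<phi>])
       (use zS openS pimS in \<open>auto simp: interior_open\<close>)
  define F where "F w = G w * K w" for w
  have cF: "(F has_contour_integral (2*pi*\<i> * G z)) (rectpath a1 a3)"
  proof -
  have cauchy': "((\<lambda>w. G w * \<psi> w / (w - z)) has_contour_integral (2*pi*\<i> * G z)) (rectpath a1 a3)"
    using cauchy by (simp add: winding_number_rectpath[OF zbox] \<psi>_def)
  show ?thesis
  proof (rule has_contour_integral_eq[OF cauchy'])
    fix w assume "w \<in> path_image (rectpath a1 a3)"
    hence "w \<noteq> z" using pimS by auto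
    thus "G w * \<psi> w / (w - z) = F w" by (simp add: \<psi>_def F_def)
  qed
  qed
  have subS: "S - {z} \<subseteq> strip b" using Ssub by auto
  have holF: "F holomorphic_on (S - {z})"
    unfolding F_def by (rule holomorphic_on_mult[OF holomorphic_on_subset[OF holG subS] holK])
  have contF: "continuous_on (S - {z}) F" by (rule holomorphic_on_imp_continuous_on[OF holF])
  have seg12: "closed_segment a1 a2 = {w. Im w = -B \<and> Re w \<in> {x0-1/2..x0+1/2}}"
    by (simp add: closed_segment_same_Im closed_segment_eq_real_ivl a1_def a2_def)
  have seg23: "closed_segment a2 a3 = {w. Re w = x0+1/2 \<and> Im w \<in> {-B..B}}"
    using B by (simp add: closed_segment_same_Re closed_segment_eq_real_ivl a2_def a3_def)
  have seg34: "closed_segment a3 a4 = {w. Im w = B \<and> Re w \<in> {x0-1/2..x0+1/2}}"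
    by (simp add: closed_segment_same_Im closed_segment_eq_real_ivl a3_def a4_def)
  have seg41: "closed_segment a4 a1 = {w. Re w = x0-1/2 \<and> Im w \<in> {-B..B}}"
    using B by (simp add: closed_segment_same_Re closed_segment_eq_real_ivl a1_def a4_def)
  have s12: "closed_segment a1 a2 \<subseteq> S - {z}" using pimS unfolding pim seg12 by auto
  have s23: "closed_segment a2 a3 \<subseteq> S - {z}" using pimS unfolding pim seg23 by auto
  have s34: "closed_segment a3 a4 \<subseteq> S - {z}" using pimS unfolding pim seg34 by auto
  have s41: "closed_segment a4 a1 \<subseteq> S - {z}" using pimS unfolding pim seg41 by auto
  define I1 where "I1 = contour_integral (linepath a1 a2) F"
  define I2 where "I2 = contour_integral (linepath a2 a3) F"
  define I3 where "I3 = contour_integral (linepath a3 a4) F"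
  define I4 where "I4 = contour_integral (linepath a4 a1) F"
  have h1: "(F has_contour_integral I1) (linepath a1 a2)" unfolding I1_def
    by (intro has_contour_integral_integral contour_integrable_continuous_linepath continuous_on_subset[OF contF s12])
  have h2: "(F has_contour_integral I2) (linepath a2 a3)" unfolding I2_def
    by (intro has_contour_integral_integral contour_integrable_continuous_linepath continuous_on_subset[OF contF s23])
  have h3: "(F has_contour_integral I3) (linepath a3 a4)" unfolding I3_def
    by (intro has_contour_integral_integral contour_integrable_continuous_linepath continuous_on_subset[OF contF s34])
  have h4: "(F has_contour_integral I4) (linepath a4 a1)" unfolding I4_def
    by (intro has_contour_integral_integral contour_integrable_continuous_linepath continuous_on_subset[OF contF s41])
  have rect: "rectpath a1 a3 = linepath a1 a2 +++ linepath a2 a3 +++ linepath a3 a4 +++ linepath a4 a1"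
    by (simp add: rectpath_def Let_def a1_def a2_def a3_def a4_def)
  have "(F has_contour_integral (I1 + (I2 + (I3 + I4)))) (rectpath a1 a3)"
    unfolding rect
    by (intro has_contour_integral_join h1 h2 h3 h4 valid_path_join valid_path_linepath) auto
  hence sum: "2*pi*\<i> * G z = I1 + (I2 + (I3 + I4))"
    using has_contour_integral_unique[OF cF] by blast
  have a12: "a1 + 1 = a2" "a4 + 1 = a3" by (simp_all add: a1_def a2_def a3_def a4_def complex_eq_iff)
  have "((\<lambda>x. F (x + 1)) has_contour_integral I2) (linepath a1 a4)"
    using has_contour_integral_translate[of F I2 1 "linepath a1 a4"] h2
    by (simp add: linepath_translate a12)
  moreover have "F (x + 1) = F x" if "x \<in> path_image (linepath a1 a4)" for x
  proof -
    have "x \<in> closed_segment a4 a1" using that by (simp add: closed_segment_commute)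
    hence "x \<in> strip b" using s41 subS by auto
    thus ?thesis by (simp add: F_def Gper Kper)
  qed
  ultimately have "(F has_contour_integral I2) (linepath a1 a4)"
    by (rule has_contour_integral_eq)
  hence "(F has_contour_integral (-I2)) (linepath a4 a1)"
    using has_contour_integral_reversepath[of "linepath a1 a4" F I2] by simp
  hence I42: "I4 = - I2" using has_contour_integral_unique[OF h4] by blast
  have sum2: "2*pi*\<i> * G z = I1 + I3" using sum I42 by simp
  have dG: "((\<lambda>w. f w - w) has_field_derivative G x) (at x within strip b)" if "x \<in> strip b" for x
    unfolding G_def
    by (rule has_field_derivative_at_within[OF DERIV_diff[OF holomorphic_derivI[OF hol open_strip that] DERIV_ident]])
  have a1s: "a1 \<in> strip b" using B by (simp add: strip_Im a1_def)
  have "(G has_contour_integral ((f a2 - a2) - (f a1 - a1))) (linepath a1 a2)"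
    using contour_integral_primitive[OF dG, of "linepath a1 a2"] s12 subS by auto
  moreover have "(f a2 - a2) - (f a1 - a1) = 0"
    using per[OF a1s] a12(1)[symmetric] by simp
  ultimately have G0: "(G has_contour_integral 0) (linepath a1 a2)" by simp
  have "((\<lambda>w. F w - 2*pi*\<i> * G w) has_contour_integral (I1 - 2*pi*\<i> * 0)) (linepath a1 a2)"
    by (intro has_contour_integral_diff h1 has_contour_integral_lmul G0)
  hence hb: "((\<lambda>w. F w - 2*pi*\<i> * G w) has_contour_integral I1) (linepath a1 a2)" by simp
  define \<epsilon> where "\<epsilon> = exp (-2*pi*(Im z + B)) / (1 - exp (-2*pi*(Im z + B)))"
  define \<eta> where "\<eta> = 1 / (exp (2*pi*(B - Im z)) - 1)"
  have "0 < \<epsilon>"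
  proof -
    have "-2*pi*(Im z + B) < 0" using z pi_gt_zero by (simp add: mult_pos_pos)
    thus ?thesis unfolding \<epsilon>_def by auto
  qed
  have "0 < \<eta>"
  proof -
    have "0 < 2*pi*(B - Im z)" using z pi_gt_zero by (simp add: mult_pos_pos)
    thus ?thesis unfolding \<eta>_def by auto
  qed
  have nI1: "cmod I1 \<le> M * (2*pi*\<epsilon>) * cmod (a2 - a1)"
  proof (rule has_contour_integral_bound_linepath[OF hb])
    show "0 \<le> M * (2*pi*\<epsilon>)" using M0 \<open>0 < \<epsilon>\<close> by simp
    fix w assume w: "w \<in> closed_segment a1 a2"
    have "F w - 2*pi*\<i> * G w = G w * (K w - 2*pi*\<i>)" by (simp add: F_def algebra_simps)
    moreover have "cmod (G w) \<le> M" using w B unfolding seg12 by (auto simp: G_def intro!: Mb)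
    moreover have "cmod (K w - 2*pi*\<i>) \<le> 2*pi*\<epsilon>"
      using K_bottom[of w B z] w z unfolding seg12 \<epsilon>_def K_def by auto
    ultimately show "cmod (F w - 2*pi*\<i> * G w) \<le> M * (2*pi*\<epsilon>)"
      by (simp add: norm_mult mult_mono M0)
  qed
  have nI3: "cmod I3 \<le> M * (2*pi*\<eta>) * cmod (a4 - a3)"
  proof (rule has_contour_integral_bound_linepath[OF h3])
    show "0 \<le> M * (2*pi*\<eta>)" using M0 \<open>0 < \<eta>\<close> by simp
    fix w assume w: "w \<in> closed_segment a3 a4"
    have "cmod (G w) \<le> M" using w B unfolding seg34 by (auto simp: G_def intro!: Mb)
    moreover have "cmod (K w) \<le> 2*pi*\<eta>"
      using K_top[of w B z] w z unfolding seg34 \<eta>_def K_def by auto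
    ultimately show "cmod (F w) \<le> M * (2*pi*\<eta>)"
      by (simp add: F_def norm_mult mult_mono M0)
  qed
  have "a2 - a1 = 1" "a4 - a3 = -1" by (simp_all add: a1_def a2_def a3_def a4_def complex_eq_iff)
  hence "cmod (a2 - a1) = 1" "cmod (a4 - a3) = 1" by simp_all
  hence "2*pi * cmod (G z) \<le> 2*pi * (M * (\<epsilon> + \<eta>))"
    using nI1 nI3 norm_triangle_ineq[of I1 I3] sum2[symmetric]
    by (simp add: norm_mult algebra_simps)
  hence "cmod (G z) \<le> M * (\<epsilon> + \<eta>)" using pi_gt_zero by simp
  thus ?thesis unfolding G_def \<epsilon>_def \<eta>_def .
qed


lemma exp_ge2: "(1::real) \<le> t \<Longrightarrow> 2 \<le> exp t"
  using exp_ge_add_one_self[of t] by linarith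

lemma Gb:
  fixes f :: "complex \<Rightarrow> complex" and b :: real
  assumes b3: "b > 3" and hol: "f holomorphic_on strip b" and inj: "inj_on f (strip b)"
    and per: "\<And>z. z \<in> strip b \<Longrightarrow> f (z + 1) = f z + 1"
    and w: "\<bar>Im w\<bar> \<le> b - 3"
  shows "cmod (deriv f w - 1) \<le> 52 * exp (2*pi*\<bar>Im w\<bar> + pi - 2*pi*b)"
proof -
  define y where "y = Im w"
  define v where "v = exp (2*pi*\<bar>y\<bar> + pi - 2*pi*b)"
  have Mb: "cmod (deriv f u - 1) \<le> 13" if "\<bar>Im u\<bar> \<le> b - 1/2" for u
  proof -
    have "cmod (deriv f u) \<le> 12" by (rule deriv_bound[OF hol inj per that])
    thus ?thesis using norm_triangle_ineq4[of "deriv f u" 1] by simp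
  qed
  have c: "cmod (deriv f w - 1) \<le> 13 * (exp (-2*pi*(Im w + (b - 1/2))) / (1 - exp (-2*pi*(Im w + (b - 1/2))))
           + 1 / (exp (2*pi*((b - 1/2) - Im w)) - 1))"
    by (rule core[OF hol per]) (use b3 w Mb in auto)
  define t where "t = 2*pi*(y + (b - 1/2))"
  define s where "s = 2*pi*((b - 1/2) - y)"
  have ya: "y + (b - 1/2) \<ge> 5/2" "(b - 1/2) - y \<ge> 5/2" using w unfolding y_def by (auto simp: abs_le_iff)
  have "2*pi*(5/2) \<le> t" "2*pi*(5/2) \<le> s" unfolding t_def s_def
    using ya by (auto intro!: mult_left_mono)
  hence t1: "1 \<le> t" "1 \<le> s" using pi_gt3 by auto
  have et: "2 \<le> exp t" "2 \<le> exp s" using exp_ge2 t1 by auto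
  have te: "t = 2*pi*y + 2*pi*b - pi" "s = 2*pi*b - pi - 2*pi*y"
    by (simp_all add: t_def s_def algebra_simps)
  have "2*pi*(-y) \<le> 2*pi*\<bar>y\<bar>" "2*pi*y \<le> 2*pi*\<bar>y\<bar>" by (intro mult_left_mono; simp)+
  hence "-t \<le> 2*pi*\<bar>y\<bar> + pi - 2*pi*b" "-s \<le> 2*pi*\<bar>y\<bar> + pi - 2*pi*b"
    using te by linarith+
  hence "exp (-t) \<le> v" "exp (-s) \<le> v" unfolding v_def by simp_all
  have e1: "exp (-t) / (1 - exp (-t)) \<le> 2 * v"
  proof -
    have "exp (-t) \<le> 1/2" using et by (simp add: exp_minus field_simps)
    hence "exp (-t) / (1 - exp (-t)) \<le> exp (-t) / (1/2)"
      using t1 by (intro divide_left_mono) auto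
    thus ?thesis using \<open>exp (-t) \<le> v\<close> by simp
  qed
  have e2: "1 / (exp s - 1) \<le> 2 * v"
  proof -
    have "1 / (exp s - 1) \<le> 2 / exp s" using et t1 by (simp add: divide_simps)
    also have "\<dots> = 2 * exp (-s)" by (simp add: exp_minus field_simps)
    finally show ?thesis using \<open>exp (-s) \<le> v\<close> by simp
  qed
  have "-2*pi*(Im w + (b - 1/2)) = -t" "2*pi*((b - 1/2) - Im w) = s" by (simp_all add: t_def s_def y_def)
  hence "cmod (deriv f w - 1) \<le> 13 * (exp (-t) / (1 - exp (-t)) + 1 / (exp s - 1))" using c by simp
  also have "\<dots> \<le> 13 * (2 * v + 2 * v)" using e1 e2 by simp
  finally show ?thesis by (simp add: v_def y_def)
qed


theorem lemma6p8:
  fixes b :: real and f :: "complex \<Rightarrow> complex"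
  assumes "b > 3"
    and "f holomorphic_on strip b"
    and "inj_on f (strip b)"
    and "f 0 = 0"
    and "\<And>z. z \<in> strip b \<Longrightarrow> f (z + 1) = f z + 1"
  shows "\<forall>z \<in> strip (b - 3).
           cmod (f z - z) \<le> (8 * pi * exp (5 * pi) * (sqrt (8 / pi) + 1))
             * (exp (2 * pi * \<bar>Im z\<bar>) + (b + 1)^2) / exp (2 * pi * b)"
proof
  note b3 = assms(1) and hol = assms(2) and inj = assms(3) and f0 = assms(4) and per = assms(5)
  define g where "g w = f w - w" for w
  define c where "c K = 52 * exp (2*pi*K + pi - 2*pi*b)" for K :: real
  have c0: "0 \<le> c K" for K by (simp add: c_def)
  have cmono: "c K \<le> c K'" if "K \<le> K'" for K K'
    using that pi_gt_zero unfolding c_def by (simp add: mult_left_mono)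
  have cstep: "c (K + 1) = exp (2*pi) * c K" for K
  proof -
    have "c (K + 1) = 52 * exp ((2*pi*K + pi - 2*pi*b) + 2*pi)" unfolding c_def
      by (rule arg_cong[where f="\<lambda>t. 52 * exp t"]) (simp add: algebra_simps)
    thus ?thesis by (simp only: exp_add c_def mult_ac)
  qed
  have e2: "2 \<le> exp (2*pi)" using exp_ge2[of "2*pi"] pi_gt3 by simp
  have dg: "(g has_field_derivative (deriv f w - 1)) (at w)" if "w \<in> strip b" for w
    unfolding g_def by (rule DERIV_diff[OF holomorphic_derivI[OF hol open_strip that] DERIV_ident])
  have segb: "cmod (g q - g p) \<le> c K * cmod (q - p)"
    if "\<bar>Im p\<bar> \<le> K" "\<bar>Im q\<bar> \<le> K" "K \<le> b - 3" for p q K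
  proof -
    have "{w. \<bar>Im w\<bar> \<le> K} = {w. Im w \<le> K} \<inter> {w. Im w \<ge> -K}" by auto
    hence cv: "convex {w. \<bar>Im w\<bar> \<le> K}" by (simp add: convex_Int convex_halfspace_Im_le convex_halfspace_Im_ge)
    have sub: "closed_segment p q \<subseteq> {w. \<bar>Im w\<bar> \<le> K}"
      by (rule closed_segment_subset) (use that cv in auto)
    show ?thesis
    proof (rule field_differentiable_bound[of "closed_segment p q" g "\<lambda>w. deriv f w - 1"])
      fix w assume w: "w \<in> closed_segment p q"
      hence wK: "\<bar>Im w\<bar> \<le> K" using sub by auto
      hence "w \<in> strip b" using that b3 by (simp add: strip_Im)
      thus "(g has_field_derivative deriv f w - 1) (at w within closed_segment p q)"
        using dg has_field_derivative_at_within by blast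
      have "cmod (deriv f w - 1) \<le> 52 * exp (2*pi*\<bar>Im w\<bar> + pi - 2*pi*b)"
        by (rule Gb[OF b3 hol inj per]) (use wK that in auto)
      also have "\<dots> \<le> c K" using cmono[OF wK] by (simp add: c_def)
      finally show "cmod (deriv f w - 1) \<le> c K" .
    qed auto
  qed
  have g1: "g (w + 1) = g w" if "w \<in> strip b" for w
    using per[OF that] by (simp add: g_def)
  have gnat: "g (w + of_nat n) = g w" if "w \<in> strip b" for w n
  proof (induction n)
    case (Suc n)
    have "w + of_nat n \<in> strip b" using that by (simp add: strip_Im)
    hence g2: "g (w + of_nat n + 1) = g (w + of_nat n)" by (rule g1)
    have "g (w + of_nat (Suc n)) = g (w + of_nat n + 1)" by (simp add: algebra_simps)
    also have "\<dots> = g w" using g2 Suc by simp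
    finally show ?case .
  qed simp
  have gint: "g (w + of_int k) = g w" if "w \<in> strip b" for w k
  proof (cases k rule: int_cases2)
    case (nonneg n) thus ?thesis using gnat[OF that, of n] by simp
  next
    case (nonpos n)
    have "w - of_nat n \<in> strip b" using that by (simp add: strip_Im)
    from gnat[OF this, of n] show ?thesis using nonpos by simp
  qed
  have vert: "\<forall>y. \<bar>y\<bar> \<le> real n \<longrightarrow> \<bar>y\<bar> \<le> b - 3 \<longrightarrow> cmod (g (\<i> * of_real y)) \<le> 2 * c (real n)" for n
  proof (induction n)
    case 0
    show ?case using f0 c0 by (auto simp: g_def)
  next
    case (Suc n)
    show ?case
    proof (intro allI impI)
      fix y :: real assume y1: "\<bar>y\<bar> \<le> real (Suc n)" and y2: "\<bar>y\<bar> \<le> b - 3"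
      have cn: "c (real n) \<le> c (real (Suc n))" by (rule cmono) simp
      show "cmod (g (\<i> * of_real y)) \<le> 2 * c (real (Suc n))"
      proof (cases "\<bar>y\<bar> \<le> real n")
        case True thus ?thesis using Suc.IH y2 cn by fastforce
      next
        case False
        define y' where "y' = (if y \<ge> 0 then real n else - real n)"
        have ay': "\<bar>y'\<bar> = real n" by (simp add: y'_def)
        have dy: "\<bar>y - y'\<bar> \<le> 1" using False y1 by (auto simp: y'_def)
        have ih: "cmod (g (\<i> * of_real y')) \<le> 2 * c (real n)"
          using Suc.IH ay' y2 False by auto
        have "cmod (g (\<i> * of_real y) - g (\<i> * of_real y')) \<le> c \<bar>y\<bar> * cmod (\<i> * of_real y - \<i> * of_real y')"
          by (rule segb) (use ay' False y2 in auto)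
        also have "cmod (\<i> * of_real y - \<i> * of_real y') = \<bar>y - y'\<bar>"
          by (simp add: norm_mult flip: right_diff_distrib of_real_diff)
        also have "c \<bar>y\<bar> * \<bar>y - y'\<bar> \<le> c (real (Suc n)) * 1"
          by (intro mult_mono cmono y1 dy c0) simp
        finally have d: "cmod (g (\<i> * of_real y) - g (\<i> * of_real y')) \<le> c (real (Suc n))" by simp
        have "c (real (Suc n)) = exp (2*pi) * c (real n)" using cstep[of "real n"] by (simp add: add.commute)
        hence "2 * c (real n) \<le> c (real (Suc n))" using e2 c0[of "real n"] by (simp add: mult_right_mono)
        thus ?thesis using d ih norm_triangle_ineq4[of "g (\<i> * of_real y)" "g (\<i> * of_real y')"]
          by (smt (verit) norm_triangle_ineq2)
      qed
    qed
  qed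
  fix z assume zs: "z \<in> strip (b - 3)"
  define y where "y = Im z"
  have ay: "\<bar>y\<bar> < b - 3" using zs by (simp add: strip_Im y_def)
  define k where "k = \<lfloor>Re z\<rfloor>"
  define z' where "z' = z + of_int (-k)"
  have zsb: "z \<in> strip b" using ay by (simp add: strip_Im y_def)
  have gz: "g z' = g z" unfolding z'_def by (rule gint[OF zsb])
  have x': "0 \<le> Re z'" "Re z' < 1" unfolding z'_def k_def by (simp_all; linarith)+
  have Imz': "Im z' = y" by (simp add: z'_def y_def)
  have h1: "cmod (g z' - g (\<i> * of_real y)) \<le> c \<bar>y\<bar> * cmod (z' - \<i> * of_real y)"
    by (rule segb) (use Imz' ay in auto)
  have "z' - \<i> * of_real y = of_real (Re z')" using Imz' by (simp add: complex_eq_iff)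
  hence "cmod (z' - \<i> * of_real y) \<le> 1" using x' by simp
  hence h1': "cmod (g z' - g (\<i> * of_real y)) \<le> c \<bar>y\<bar>"
    using h1 c0[of "\<bar>y\<bar>"] by (smt (verit) mult_left_le)
  define n where "n = nat \<lceil>\<bar>y\<bar>\<rceil>"
  have n1: "\<bar>y\<bar> \<le> real n" "real n \<le> \<bar>y\<bar> + 1" unfolding n_def by linarith+
  have h2: "cmod (g (\<i> * of_real y)) \<le> 2 * c (real n)" using vert[of n] n1 ay by auto
  also have "\<dots> \<le> 2 * c (\<bar>y\<bar> + 1)" using cmono[OF n1(2)] by simp
  also have "\<dots> = 2 * exp (2*pi) * c \<bar>y\<bar>" using cstep by simp
  finally have h2': "cmod (g (\<i> * of_real y)) \<le> 2 * exp (2*pi) * c \<bar>y\<bar>" .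
  have "cmod (g z) \<le> cmod (g z' - g (\<i> * of_real y)) + cmod (g (\<i> * of_real y))"
    using gz norm_triangle_sub[of "g z'" "g (\<i> * of_real y)"] by simp
  also have "\<dots> \<le> c \<bar>y\<bar> + 2 * exp (2*pi) * c \<bar>y\<bar>" using h1' h2' by linarith
  also have "\<dots> = (1 + 2 * exp (2*pi)) * c \<bar>y\<bar>" by (simp add: algebra_simps)
  finally have gzb: "cmod (g z) \<le> (1 + 2 * exp (2*pi)) * c \<bar>y\<bar>" .
  define X where "X = exp (2*pi*\<bar>y\<bar> - 2*pi*b)"
  define a where "a = exp pi"
  define e where "e = exp (2*pi)"
  have X0: "0 < X" "0 < a" "0 < e" by (simp_all add: X_def a_def e_def)
  have cy: "c \<bar>y\<bar> = 52 * a * X"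
  proof -
    have "exp (2*pi*\<bar>y\<bar> + pi - 2*pi*b) = exp (pi + (2*pi*\<bar>y\<bar> - 2*pi*b))"
      by (rule arg_cong[where f=exp]) simp
    thus ?thesis by (simp only: c_def a_def X_def exp_add mult.assoc)
  qed
  have e5: "exp (5*pi) = a * e * e"
  proof -
    have "exp (5*pi) = exp (pi + 2*pi + 2*pi)" by (rule arg_cong[where f=exp]) simp
    thus ?thesis by (simp only: a_def e_def exp_add)
  qed
  have e7: "7 \<le> e" using exp_ge_add_one_self[of "2*pi"] pi_gt3 unfolding e_def by linarith
  define C2 where "C2 = 8 * pi * exp (5 * pi) * (sqrt (8 / pi) + 1)"
  have k1: "(1 + 2 * e) * 52 * a \<le> 156 * a * e"
    using X0 e7 by (simp add: algebra_simps)
  have k2: "156 * a * e \<le> 24 * a * e * e"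
    using X0 e7 by (simp add: mult_le_cancel_right mult_le_cancel_left)
  have "24 \<le> 8 * pi * (sqrt (8 / pi) + 1)"
  proof -
    have "24 \<le> 8 * pi * 1" using pi_gt3 by simp
    also have "\<dots> \<le> 8 * pi * (sqrt (8 / pi) + 1)" by (intro mult_left_mono) auto
    finally show ?thesis .
  qed
  hence k3: "24 * a * e * e \<le> C2" unfolding C2_def e5 using X0
    by (simp add: mult_right_mono mult.assoc mult.left_commute)
  have main: "cmod (g z) \<le> C2 * X"
  proof -
    have eq: "(1 + 2 * exp (2*pi)) * c \<bar>y\<bar> = ((1 + 2 * e) * 52 * a) * X"
      unfolding cy e_def by (simp add: algebra_simps)
    have "cmod (g z) \<le> ((1 + 2 * e) * 52 * a) * X" using gzb unfolding eq .
    also have "\<dots> \<le> C2 * X"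
    proof -
      have "(1 + 2 * e) * 52 * a \<le> C2" using k1 k2 k3 by linarith
      thus ?thesis using X0 by (intro mult_right_mono) auto
    qed
    finally show ?thesis .
  qed
  have "C2 * X = C2 * exp (2*pi*\<bar>Im z\<bar>) / exp (2*pi*b)"
    unfolding X_def y_def by (simp add: exp_diff)
  also have "\<dots> \<le> C2 * (exp (2*pi*\<bar>Im z\<bar>) + (b+1)^2) / exp (2*pi*b)"
  proof -
    have "0 < 24 * a * e * e" using X0 by simp
    hence "0 \<le> C2" using k3 by linarith
    thus ?thesis by (intro divide_right_mono mult_left_mono) auto
  qed
  finally show "cmod (f z - z) \<le> (8 * pi * exp (5 * pi) * (sqrt (8 / pi) + 1))
             * (exp (2 * pi * \<bar>Im z\<bar>) + (b + 1)^2) / exp (2 * pi * b)"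
    using main unfolding C2_def g_def by simp
qed

end
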